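(* Let $G=(V,E)$ be a bipartite graph with probabilities $p_e\in(0,1]$, and let $x$ be a feasible solution of (LP-BIP). Let $\hat E\subseteq E$ be a random set, and write $\hat x_e=\mathbf 1[e\in\hat E]$. Assume $\hat E$ satisfies: - (marginals) $\Pr[\hat x_e=1]=x_e$ for every $e\in E$; - (negative correlation) for every $v\in V$, every $S\subseteq\delta(v)$ and every $b\in\{0,1\}$, $\Pr[\bigwedge_{e\in S}\hat x_e=b]\le\prod_{e\in S}\Pr[\hat x_e=b]$. Independently of $\hat E$, draw independent random variables $Y_e$ for $e\in E$, where $Y_e$ takes values in $[0,\frac{1}{p_e}\ln\frac1{1-p_e}]$ and $\Pr[Y_e\le y]=\frac{1}{p_e}(1-e^{-p_e y})$ on that interval (for $p_e=1$ the interval is $[0,\infty)$). Run the following process: - consider the edges of $\hat E$ in increasing order of $Y_e$; - when edge $e$ is considered, probe it if no edge of $\hat\delta(e):=\delta(e)\cap\hat E$ has already been added to the matching; - a probed edge exists independently with probability $p_e$, and if it exists it is added to the matching. Call $e\in\hat E$ safe if, at the moment $e$ is considered, no edge of $\hat\delta(e)$ is in the matching. Then for every edge $e$, $$\Pr[e\text{ is safe}\mid e\in\hat E]\ \ge\ g(p_e),$$ where $g$ is the function defined in the context below.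
   Context: (LP-BIP) is the linear program in variables $x_e$, $e\in E$: maximize $\sum_{e\in E}w_ep_ex_e$ subject to - $\sum_{e\in\delta(v)}p_ex_e\le 1$ for all $v\in V$; - $\sum_{e\in\delta(v)}x_e\le t_v$ for all $v\in V$; - $0\le x_e\le 1$ for all $e\in E$. Here $\delta(v)$ is the set of edges incident to $v$, and for an edge $e$, $\delta(e)$ is the set of edges other than $e$ sharing an endpoint with $e$. The function $g$ is defined by $g(p)=\frac{1}{2+p}\bigl(1-\exp(-\frac{2+p}{p}\ln\frac{1}{1-p})\bigr)$ for $p\in(0,1)$, and $g(1)=\frac13$ (the limit as $p\to1$). *)

theory Defs
  imports "HOL-Probability.Probability"
begin

definition delta_v :: "'v set set \<Rightarrow> 'v \<Rightarrow> 'v set set" where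
  "delta_v E v = {e \<in> E. v \<in> e}"

definition delta_e :: "'v set set \<Rightarrow> 'v set \<Rightarrow> 'v set set" where
  "delta_e E e = {f \<in> E. f \<noteq> e \<and> f \<inter> e \<noteq> {}}"

definition bipartite_graph :: "'v set \<Rightarrow> 'v set set \<Rightarrow> bool" where
  "bipartite_graph V E \<longleftrightarrow> finite V \<and> (\<forall>e\<in>E. e \<subseteq> V \<and> card e = 2) \<and>
     (\<exists>L. L \<subseteq> V \<and> (\<forall>e\<in>E. card (e \<inter> L) = 1))"

definition lp_bip_feasible ::
  "'v set \<Rightarrow> 'v set set \<Rightarrow> ('v set \<Rightarrow> real) \<Rightarrow> ('v \<Rightarrow> nat) \<Rightarrow> ('v set \<Rightarrow> real) \<Rightarrow> bool" where
  "lp_bip_feasible V E p t x \<longleftrightarrow>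
     (\<forall>v\<in>V. (\<Sum>e\<in>delta_v E v. p e * x e) \<le> 1) \<and>
     (\<forall>v\<in>V. (\<Sum>e\<in>delta_v E v. x e) \<le> real (t v)) \<and>
     (\<forall>e\<in>E. 0 \<le> x e \<and> x e \<le> 1)"

definition g :: "real \<Rightarrow> real" where
  "g p = (if p = 1 then 1/3
          else (1 / (2 + p)) * (1 - exp (- ((2 + p) / p) * ln (1 / (1 - p)))))"

text \<open>Order in which the edges of the random set are considered: increasing Y,
  ties broken by an (arbitrary, injective) rank r.\<close>
definition consider_order :: "'e set \<Rightarrow> ('e \<Rightarrow> real) \<Rightarrow> ('e \<Rightarrow> nat) \<Rightarrow> 'e list" where
  "consider_order A Y r = (THE xs. set xs = A \<and>
      sorted_wrt (\<lambda>e f. Y e < Y f \<or> (Y e = Y f \<and> r e < r f)) xs)"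

fun run_process :: "'v set set \<Rightarrow> ('v set \<Rightarrow> bool) \<Rightarrow> 'v set list \<Rightarrow> 'v set set \<Rightarrow> 'v set set" where
  "run_process E X [] Mt = Mt"
| "run_process E X (e # es) Mt =
     run_process E X es
       (if (\<exists>f\<in>Mt. f \<in> delta_e E e) then Mt else if X e then insert e Mt else Mt)"

definition safe :: "'v set set \<Rightarrow> 'v set set \<Rightarrow> ('v set \<Rightarrow> real) \<Rightarrow> ('v set \<Rightarrow> nat)
     \<Rightarrow> ('v set \<Rightarrow> bool) \<Rightarrow> 'v set \<Rightarrow> bool" where
  "safe E Eh Y r X e \<longleftrightarrow> e \<in> Eh \<and>
     (let xs = consider_order Eh Y r;
          Mt = run_process E X (takeWhile (\<lambda>f. f \<noteq> e) xs) {}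
      in \<not> (\<exists>f\<in>Mt. f \<in> delta_e E e \<inter> Eh))"

datatype 'e source = SrcE | SrcY 'e | SrcX 'e

end

theory Submission
  imports Defs "HOL-Real_Asymp.Real_Asymp"
begin

lemma sorted_wrt_unique:
  assumes irr: "\<And>a. \<not> R a a" and asym: "\<And>a b. R a b \<Longrightarrow> \<not> R b a"
  shows "sorted_wrt R xs \<Longrightarrow> sorted_wrt R ys \<Longrightarrow> set xs = set ys \<Longrightarrow> xs = ys"
proof (induction xs arbitrary: ys)
  case Nil then show ?case by simp
next
  case (Cons a xs)
  then obtain b ys' where ys: "ys = b # ys'" by (cases ys) auto
  have "a = b"
  proof (rule ccontr)
    assume "a \<noteq> b"
    then have "a \<in> set ys'" "b \<in> set xs" using Cons.prems ys by auto
    then have "R b a" "R a b" using Cons.prems ys by auto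
    then show False using asym by blast
  qed
  have "a \<notin> set xs" "b \<notin> set ys'" using Cons.prems ys irr by auto
  then have "set xs = set ys'" using Cons.prems ys \<open>a = b\<close> by auto
  then show ?case using Cons ys \<open>a = b\<close> by auto
qed

lemma consider_order_ex:
  fixes Y :: "'a \<Rightarrow> real" and r :: "'a \<Rightarrow> nat"
  assumes inj: "inj_on r A"
  shows "finite A \<Longrightarrow> \<exists>xs. set xs = A \<and> sorted_wrt (\<lambda>e f. Y e < Y f \<or> (Y e = Y f \<and> r e < r f)) xs"
  using inj
proof (induction "card A" arbitrary: A)
  case 0
  then show ?case by (intro exI[of _ "[]"]) auto
next
  case (Suc n)
  then have ne: "A \<noteq> {}" by auto
  define y0 where "y0 = Min (Y ` A)"
  have y0: "y0 \<in> Y ` A" "\<And>x. x \<in> A \<Longrightarrow> y0 \<le> Y x"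
    using Suc.prems ne unfolding y0_def by auto
  define C where "C = {f \<in> A. Y f = y0}"
  have Cfin: "finite C" "C \<noteq> {}" using Suc.prems y0 unfolding C_def by auto
  have "Min (r ` C) \<in> r ` C" using Cfin by auto
  then obtain m where m0: "m \<in> C" "r m = Min (r ` C)" by auto
  have m: "m \<in> C" "\<And>x. x \<in> C \<Longrightarrow> r m \<le> r x" using m0 Cfin by auto
  have mA: "m \<in> A" "Y m = y0" using m(1) unfolding C_def by auto
  have less: "Y m < Y x \<or> (Y m = Y x \<and> r m < r x)" if "x \<in> A" "x \<noteq> m" for x
  proof (cases "Y x = y0")
    case True
    then have "r m \<le> r x" using m(2) that unfolding C_def by auto
    moreover have "r m \<noteq> r x" using Suc.prems(2) that mA by (auto dest: inj_onD)
    ultimately show ?thesis using True mA by auto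
  next
    case False then show ?thesis using y0(2)[OF that(1)] mA by auto
  qed
  have "n = card (A - {m})" using Suc.hyps(2) mA by auto
  moreover have "inj_on r (A - {m})" using Suc.prems(2) by (auto intro: inj_on_subset)
  ultimately obtain xs where xs: "set xs = A - {m}"
    "sorted_wrt (\<lambda>e f. Y e < Y f \<or> (Y e = Y f \<and> r e < r f)) xs"
    using Suc.hyps(1) Suc.prems(1) by blast
  show ?case
    using xs less mA by (intro exI[of _ "m # xs"]) auto
qed

lemma consider_order_ex1:
  fixes Y :: "'a \<Rightarrow> real" and r :: "'a \<Rightarrow> nat"
  assumes fin: "finite A" and inj: "inj_on r A"
  shows "\<exists>!xs. set xs = A \<and> sorted_wrt (\<lambda>e f. Y e < Y f \<or> (Y e = Y f \<and> r e < r f)) xs"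
proof -
  obtain xs where "set xs = A \<and> sorted_wrt (\<lambda>e f. Y e < Y f \<or> (Y e = Y f \<and> r e < r f)) xs"
    using consider_order_ex[OF inj fin] by blast
  moreover have "ys = xs" if "set ys = A \<and> sorted_wrt (\<lambda>e f. Y e < Y f \<or> (Y e = Y f \<and> r e < r f)) ys"
      "set xs = A \<and> sorted_wrt (\<lambda>e f. Y e < Y f \<or> (Y e = Y f \<and> r e < r f)) xs" for ys xs
    using that by (intro sorted_wrt_unique[of "\<lambda>e f. Y e < Y f \<or> (Y e = Y f \<and> r e < r f)"]) auto
  ultimately show ?thesis by blast
qed

lemma consider_order_props:
  fixes Y :: "'a \<Rightarrow> real" and r :: "'a \<Rightarrow> nat"
  assumes fin: "finite A" and inj: "inj_on r A"
  shows "set (consider_order A Y r) = A \<and>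
     sorted_wrt (\<lambda>e f. Y e < Y f \<or> (Y e = Y f \<and> r e < r f)) (consider_order A Y r)"
  unfolding consider_order_def by (rule theI'[OF consider_order_ex1[OF fin inj]])

lemma run_process_sub:
  "run_process E X es Mt \<subseteq> Mt \<union> {f \<in> set es. X f}"
proof (induction es arbitrary: Mt)
  case Nil then show ?case by simp
next
  case (Cons a es)
  define Mt' where "Mt' = (if (\<exists>f\<in>Mt. f \<in> delta_e E a) then Mt else if X a then insert a Mt else Mt)"
  have "run_process E X (a # es) Mt = run_process E X es Mt'" by (simp add: Mt'_def)
  also have "\<dots> \<subseteq> Mt' \<union> {f \<in> set es. X f}" by (rule Cons.IH)
  also have "\<dots> \<subseteq> Mt \<union> {f \<in> set (a # es). X f}" unfolding Mt'_def by auto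
  finally show ?case .
qed

lemma run_process_cong:
  "(\<And>f. f \<in> set es \<Longrightarrow> X f = X' f) \<Longrightarrow> run_process E X es Mt = run_process E X' es Mt"
  by (induction es arbitrary: Mt) auto

lemma safe_suff:
  assumes fin: "finite Eh" and inj: "inj_on r Eh" and eEh: "e \<in> Eh"
    and cond: "\<forall>f\<in>delta_e E e \<inter> Eh. X f \<longrightarrow> Y e < Y f"
  shows "safe E Eh Y r X e"
proof -
  define xs where "xs = consider_order Eh Y r"
  have P: "set xs = Eh" "sorted_wrt (\<lambda>e f. Y e < Y f \<or> (Y e = Y f \<and> r e < r f)) xs"
    using consider_order_props[OF fin inj] unfolding xs_def by auto
  define pre where "pre = takeWhile (\<lambda>f. f \<noteq> e) xs"
  have "e \<in> set xs" using P eEh by auto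
  then obtain rest where dw: "dropWhile (\<lambda>f. f \<noteq> e) xs = e # rest"
    by (metis (mono_tags, lifting) dropWhile_eq_Nil_conv hd_dropWhile list.collapse)
  then have xs_eq: "xs = pre @ e # rest" unfolding pre_def by (simp add: dropWhile_eq_Cons_conv)
  have before: "Y f \<le> Y e" if "f \<in> set pre" for f
    using P(2) that unfolding xs_eq sorted_wrt_append by auto
  have "\<not> (\<exists>f\<in>run_process E X pre {}. f \<in> delta_e E e \<inter> Eh)"
  proof
    assume "\<exists>f\<in>run_process E X pre {}. f \<in> delta_e E e \<inter> Eh"
    then obtain f where f: "f \<in> run_process E X pre {}" "f \<in> delta_e E e \<inter> Eh" by blast
    then have "f \<in> set pre" "X f" using run_process_sub[of E X pre "{}"] by auto
    then show False using before cond f(2) by force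
  qed
  then show ?thesis unfolding safe_def Let_def xs_def[symmetric] pre_def[symmetric] using eEh by simp
qed

lemma safe_cong:
  fixes Y Y' :: "'v set \<Rightarrow> real"
  assumes fin: "finite Eh" and inj: "inj_on r Eh"
  assumes sub: "Eh \<subseteq> E"
    and Yc: "\<And>f g. f \<in> E \<Longrightarrow> g \<in> E \<Longrightarrow> (Y f \<le> Y g) = (Y' f \<le> Y' g)"
    and Xc: "\<And>f. f \<in> E \<Longrightarrow> X f = X' f"
  shows "safe E Eh Y r X e = safe E Eh Y' r X' e"
proof -
  have R: "(Y a < Y b \<or> (Y a = Y b \<and> r a < r b)) = (Y' a < Y' b \<or> (Y' a = Y' b \<and> r a < r b))"
    if "a \<in> E" "b \<in> E" for a b
    using Yc[OF that] Yc[OF that(2,1)] by (auto simp: less_le_not_le order_eq_iff)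
  have "(\<lambda>xs. set xs = Eh \<and> sorted_wrt (\<lambda>e f. Y e < Y f \<or> (Y e = Y f \<and> r e < r f)) xs)
      = (\<lambda>xs. set xs = Eh \<and> sorted_wrt (\<lambda>e f. Y' e < Y' f \<or> (Y' e = Y' f \<and> r e < r f)) xs)"
  proof (intro ext iffI conjI)
    fix xs assume a: "set xs = Eh \<and> sorted_wrt (\<lambda>e f. Y e < Y f \<or> (Y e = Y f \<and> r e < r f)) xs"
    then show "set xs = Eh" by simp
    show "sorted_wrt (\<lambda>e f. Y' e < Y' f \<or> (Y' e = Y' f \<and> r e < r f)) xs"
      using a by (intro sorted_wrt_mono_rel[of xs, OF _ conjunct2[OF a]]) (use R sub in blast)
  next
    fix xs assume a: "set xs = Eh \<and> sorted_wrt (\<lambda>e f. Y' e < Y' f \<or> (Y' e = Y' f \<and> r e < r f)) xs"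
    then show "set xs = Eh" by simp
    show "sorted_wrt (\<lambda>e f. Y e < Y f \<or> (Y e = Y f \<and> r e < r f)) xs"
      using a by (intro sorted_wrt_mono_rel[of xs, OF _ conjunct2[OF a]]) (use R sub in blast)
  qed
  then have co: "consider_order Eh Y r = consider_order Eh Y' r" unfolding consider_order_def by simp
  have "run_process E X (takeWhile (\<lambda>f. f \<noteq> e) xs) {} = run_process E X' (takeWhile (\<lambda>f. f \<noteq> e) xs) {}"
    if "xs = consider_order Eh Y' r" for xs
  proof (rule run_process_cong)
    fix f assume "f \<in> set (takeWhile (\<lambda>f. f \<noteq> e) xs)"
    then have "f \<in> set xs" by (meson set_takeWhileD)
    then have "f \<in> Eh" using that consider_order_props[OF fin inj, of Y'] by auto
    then show "X f = X' f" using Xc sub by auto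
  qed
  then show ?thesis unfolding safe_def Let_def co by simp
qed

lemma Int_stable_vimage: "Int_stable {h -` A \<inter> \<Omega> | A. A \<in> sets K}"
  unfolding Int_stable_def
proof (safe)
  fix A B assume "A \<in> sets K" "B \<in> sets K"
  then show "\<exists>C. (h -` A \<inter> \<Omega>) \<inter> (h -` B \<inter> \<Omega>) = h -` C \<inter> \<Omega> \<and> C \<in> sets K"
    by (intro exI[of _ "A \<inter> B"]) auto
qed

lemma h_meas:
  assumes [measurable]: "Xf \<in> measurable N (count_space UNIV)" "Yf \<in> borel_measurable N"
  shows "(\<lambda>\<omega>. if Xf \<omega> then ereal (Yf \<omega>) else \<infinity>) \<in> borel_measurable N"
  by measurable

lemma R_meas_gen:
  assumes "finite S" "\<And>f. f \<in> S \<Longrightarrow> Xs f \<in> measurable N (count_space UNIV)"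
    "\<And>f. f \<in> S \<Longrightarrow> Ys f \<in> borel_measurable N"
  shows "(\<lambda>\<omega>. if S = {} then \<infinity> else Min ((\<lambda>f. if Xs f \<omega> then ereal (Ys f \<omega>) else \<infinity>) ` S))
     \<in> borel_measurable N"
proof (cases "S = {}")
  case True then show ?thesis by simp
next
  case False
  have "(\<lambda>\<omega>. Min ((\<lambda>f. if Xs f \<omega> then ereal (Ys f \<omega>) else \<infinity>) ` S)) \<in> borel_measurable N"
    by (rule borel_measurable_Min[OF assms(1)]) (intro h_meas assms(2,3); assumption)
  then show ?thesis using False by simp
qed

lemma (in prob_space) indep_lt:
  fixes T :: "'a \<Rightarrow> ereal" and R :: "'a \<Rightarrow> ereal"
  assumes ind: "indep_var borel T borel R"
  shows "emeasure M {\<omega>\<in>space M. T \<omega> < R \<omega>}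
     = (\<integral>\<^sup>+t. emeasure M {\<omega>\<in>space M. t < R \<omega>} \<partial>distr M borel T)"
proof -
  have rv: "random_variable borel T" "random_variable borel R"
    and eq: "distr M borel T \<Otimes>\<^sub>M distr M borel R = distr M (borel \<Otimes>\<^sub>M borel) (\<lambda>x. (T x, R x))"
    using ind indep_var_distribution_eq by auto
  note [measurable] = rv
  let ?S = "{z \<in> space (borel \<Otimes>\<^sub>M borel). (fst z :: ereal) < (snd z :: ereal)}"
  have Smeas: "?S \<in> sets (borel \<Otimes>\<^sub>M borel)"
  proof -
    have "(fst :: ereal \<times> ereal \<Rightarrow> ereal) \<in> borel_measurable (borel \<Otimes>\<^sub>M borel)"
      "(snd :: ereal \<times> ereal \<Rightarrow> ereal) \<in> borel_measurable (borel \<Otimes>\<^sub>M borel)"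
      by (rule measurable_fst measurable_snd)+
    from borel_measurable_less[OF this] show ?thesis .
  qed
  have "emeasure M {\<omega>\<in>space M. T \<omega> < R \<omega>}
      = emeasure (distr M (borel \<Otimes>\<^sub>M borel) (\<lambda>x. (T x, R x))) ?S"
    by (subst emeasure_distr[OF _ Smeas]) (auto simp: space_pair_measure intro!: arg_cong[where f="emeasure M"])
  also have "\<dots> = emeasure (distr M borel T \<Otimes>\<^sub>M distr M borel R) ?S" using eq by simp
  also have "\<dots> = (\<integral>\<^sup>+t. emeasure (distr M borel R) (Pair t -` ?S) \<partial>distr M borel T)"
  proof -
    interpret RR: prob_space "distr M borel R" by (rule prob_space_distr[OF rv(2)])
    have Smeas2: "?S \<in> sets (distr M borel T \<Otimes>\<^sub>M distr M borel R)"
      using Smeas by (simp cong: sets_pair_measure_cong)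
    show ?thesis by (rule RR.emeasure_pair_measure_alt[OF Smeas2])
  qed
  also have "\<dots> = (\<integral>\<^sup>+t. emeasure M {\<omega>\<in>space M. t < R \<omega>} \<partial>distr M borel T)"
  proof (rule nn_integral_cong)
    fix t
    have "Pair t -` ?S = {r. t < r}" by (auto simp: space_pair_measure)
    moreover have "{r. t < r} \<in> sets (borel :: ereal measure)" by measurable
    ultimately show "emeasure (distr M borel R) (Pair t -` ?S) = emeasure M {\<omega>\<in>space M. t < R \<omega>}"
      by (simp add: emeasure_distr Collect_conj_eq Int_commute vimage_def)
  qed
  finally show ?thesis .
qed

locale L2 =
  fixes V :: "'v set" and E :: "'v set set"
    and p x :: "'v set \<Rightarrow> real" and t :: "'v \<Rightarrow> nat"
    and M :: "'w measure"
    and Ehat :: "'w \<Rightarrow> 'v set set"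
    and Y :: "'v set \<Rightarrow> 'w \<Rightarrow> real"
    and X :: "'v set \<Rightarrow> 'w \<Rightarrow> bool"
    and r :: "'v set \<Rightarrow> nat"
    and e :: "'v set"
  assumes bip: "bipartite_graph V E"
    and p_range: "\<forall>f\<in>E. 0 < p f \<and> p f \<le> 1"
    and feas: "lp_bip_feasible V E p t x"
    and M: "prob_space M"
    and Ehat_meas: "Ehat \<in> measurable M (count_space UNIV)"
    and Ehat_sub: "\<forall>\<omega>\<in>space M. Ehat \<omega> \<subseteq> E"
    and marg: "\<forall>f\<in>E. measure M {\<omega> \<in> space M. f \<in> Ehat \<omega>} = x f"
    and negcor: "\<forall>v\<in>V. \<forall>S\<subseteq>delta_v E v. \<forall>b::bool.
        measure M {\<omega> \<in> space M. \<forall>f\<in>S. (f \<in> Ehat \<omega>) = b}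
          \<le> (\<Prod>f\<in>S. measure M {\<omega> \<in> space M. (f \<in> Ehat \<omega>) = b})"
    and Y_meas: "\<forall>f\<in>E. Y f \<in> borel_measurable M"
    and Y_range: "\<forall>f\<in>E. AE \<omega> in M. 0 \<le> Y f \<omega> \<and>
        (p f = 1 \<or> Y f \<omega> \<le> (1 / p f) * ln (1 / (1 - p f)))"
    and Y_cdf: "\<forall>f\<in>E. \<forall>y. 0 \<le> y \<and> (p f = 1 \<or> y \<le> (1 / p f) * ln (1 / (1 - p f))) \<longrightarrow>
        measure M {\<omega> \<in> space M. Y f \<omega> \<le> y} = (1 / p f) * (1 - exp (- p f * y))"
    and X_meas: "\<forall>f\<in>E. X f \<in> measurable M (count_space UNIV)"
    and X_prob: "\<forall>f\<in>E. measure M {\<omega> \<in> space M. X f \<omega>} = p f"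
    and indep: "prob_space.indep_sets M
        (\<lambda>i. case i of
            SrcE \<Rightarrow> {Ehat -` A \<inter> space M | A. A \<in> sets (count_space UNIV)}
          | SrcY f \<Rightarrow> {Y f -` A \<inter> space M | A. A \<in> sets borel}
          | SrcX f \<Rightarrow> {X f -` A \<inter> space M | A. A \<in> sets (count_space UNIV)})
        ({SrcE} \<union> SrcY ` E \<union> SrcX ` E)"
    and r_inj: "inj_on r E"
    and eE: "e \<in> E"

sublocale L2 \<subseteq> prob_space M by (rule M)

context L2
begin

definition F :: "'v set source \<Rightarrow> 'w set set" where
  "F = (\<lambda>i. case i of
            SrcE \<Rightarrow> {Ehat -` A \<inter> space M | A. A \<in> sets (count_space UNIV)}
          | SrcY f \<Rightarrow> {Y f -` A \<inter> space M | A. A \<in> sets borel}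
          | SrcX f \<Rightarrow> {X f -` A \<inter> space M | A. A \<in> sets (count_space UNIV)})"

definition I0 where "I0 = {SrcE} \<union> SrcY ` E \<union> SrcX ` E"

definition Sig :: "'v set source set \<Rightarrow> 'w measure" where
  "Sig P = sigma (space M) (\<Union>i\<in>P. F i)"

definition D where "D = delta_e E e"

lemma indepF: "indep_sets F I0"
  using indep unfolding F_def I0_def .

lemma finE: "finite E"
proof -
  have "finite V" "\<forall>e\<in>E. e \<subseteq> V" using bip unfolding bipartite_graph_def by auto
  then show ?thesis by (meson Pow_iff finite_Pow_iff rev_finite_subset subsetI)
qed

lemma D_props: "finite D" "D \<subseteq> E" "e \<notin> D"
  using finE unfolding D_def delta_e_def by auto

lemma F_Pow: "(\<Union>i\<in>P. F i) \<subseteq> Pow (space M)"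
  unfolding F_def by (auto split: source.splits)

lemma sets_Sig: "sets (Sig P) = sigma_sets (space M) (\<Union>i\<in>P. F i)"
  unfolding Sig_def using F_Pow by (rule sets_measure_of)

lemma space_Sig: "space (Sig P) = space M"
  unfolding Sig_def using F_Pow by (rule space_measure_of)

lemma F_stable: "Int_stable (F i)"
  unfolding F_def by (cases i) (simp_all only: source.case Int_stable_vimage)

lemma meas_SigY: "SrcY f \<in> P \<Longrightarrow> Y f \<in> borel_measurable (Sig P)"
  apply (rule measurableI)
   apply simp
  unfolding space_Sig sets_Sig
  apply (rule sigma_sets.Basic)
  apply (rule UN_I[of "SrcY f"], assumption)
  unfolding F_def by auto

lemma meas_SigX: "SrcX f \<in> P \<Longrightarrow> X f \<in> measurable (Sig P) (count_space UNIV)"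
  apply (rule measurableI)
   apply simp
  unfolding space_Sig sets_Sig
  apply (rule sigma_sets.Basic)
  apply (rule UN_I[of "SrcX f"], assumption)
  unfolding F_def by auto

lemma meas_SigE: "SrcE \<in> P \<Longrightarrow> Ehat \<in> measurable (Sig P) (count_space UNIV)"
  apply (rule measurableI)
   apply simp
  unfolding space_Sig sets_Sig
  apply (rule sigma_sets.Basic)
  apply (rule UN_I[of "SrcE"], assumption)
  unfolding F_def by auto

lemma indep_family:
  assumes "disjoint_family_on G J" "(\<Union>j\<in>J. G j) \<subseteq> I0"
  shows "indep_sets (\<lambda>j. sets (Sig (G j))) J"
  unfolding sets_Sig
  by (rule indep_sets_collect_sigma[OF indep_sets_mono_index[OF assms(2) indepF] F_stable assms(1)])

lemma indep2:
  assumes "P \<subseteq> I0" "Q \<subseteq> I0" "P \<inter> Q = {}"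
  shows "indep_set (sets (Sig P)) (sets (Sig Q))"
proof -
  have "indep_sets (\<lambda>j. sets (Sig (case_bool P Q j))) UNIV"
    by (rule indep_family) (use assms in \<open>auto simp: disjoint_family_on_def split: bool.splits\<close>)
  then show ?thesis unfolding indep_set_def
    by (rule indep_sets_cong[THEN iffD1, rotated -1]) (auto split: bool.splits)
qed

lemma indep2D:
  assumes "P \<subseteq> I0" "Q \<subseteq> I0" "P \<inter> Q = {}" "a \<in> sets (Sig P)" "b \<in> sets (Sig Q)"
  shows "prob (a \<inter> b) = prob a * prob b"
  using indep_setD[OF indep2[OF assms(1-3)] assms(4,5)] .

definition hR :: "'v set \<Rightarrow> 'w \<Rightarrow> ereal" where
  "hR f \<omega> = (if X f \<omega> then ereal (Y f \<omega>) else \<infinity>)"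

definition R :: "'v set set \<Rightarrow> 'w \<Rightarrow> ereal" where
  "R B \<omega> = (if D \<inter> B = {} then \<infinity> else Min ((\<lambda>f. hR f \<omega>) ` (D \<inter> B)))"

definition sB :: "'v set set \<Rightarrow> real" where
  "sB B = (\<Sum>f\<in>D \<inter> B. p f)"

lemma R_less: "ereal s < R B \<omega> \<longleftrightarrow> (\<forall>f\<in>D \<inter> B. X f \<omega> \<longrightarrow> s < Y f \<omega>)"
proof (cases "D \<inter> B = {}")
  case True then show ?thesis by (simp add: R_def)
next
  case False
  have fin: "finite (D \<inter> B)" using D_props by auto
  have "ereal s < Min ((\<lambda>f. hR f \<omega>) ` (D \<inter> B)) \<longleftrightarrow> (\<forall>f\<in>D \<inter> B. ereal s < hR f \<omega>)"
    using fin False by (simp add: Min_gr_iff)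
  then show ?thesis using False unfolding R_def hR_def by auto
qed

lemma R_meas: "SrcY ` (D \<inter> B) \<union> SrcX ` (D \<inter> B) \<subseteq> P \<Longrightarrow> R B \<in> borel_measurable (Sig P)"
  unfolding R_def hR_def
  by (rule R_meas_gen) (use D_props in \<open>auto intro!: meas_SigX meas_SigY\<close>)

lemma R_measM: "R B \<in> borel_measurable M"
  unfolding R_def hR_def
  by (rule R_meas_gen) (use D_props X_meas Y_meas in auto)

lemma YmeasE[measurable]: "f \<in> E \<Longrightarrow> Y f \<in> borel_measurable M"
  using Y_meas by auto
lemma XmeasE[measurable]: "f \<in> E \<Longrightarrow> X f \<in> measurable M (count_space UNIV)"
  using X_meas by auto

lemma evY: "f \<in> E \<Longrightarrow> {\<omega>\<in>space M. Y f \<omega> \<le> s} \<in> events"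
  by measurable
lemma evX: "f \<in> E \<Longrightarrow> {\<omega>\<in>space M. X f \<omega>} \<in> events"
  by measurable

lemma Sig_event_YX:
  assumes "SrcY f \<in> P" "SrcX f \<in> P"
  shows "{\<omega>\<in>space M. \<not> (X f \<omega> \<and> Y f \<omega> \<le> s)} \<in> sets (Sig P)"
proof -
  note [measurable] = meas_SigY[OF assms(1)] meas_SigX[OF assms(2)]
  have "{\<omega>\<in>space (Sig P). \<not> (X f \<omega> \<and> Y f \<omega> \<le> s)} \<in> sets (Sig P)" by measurable
  then show ?thesis by (simp add: space_Sig)
qed

lemma prob_XY:
  assumes "f \<in> E"
  shows "prob {\<omega>\<in>space M. X f \<omega> \<and> Y f \<omega> \<le> s} = p f * prob {\<omega>\<in>space M. Y f \<omega> \<le> s}"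
proof -
  have a: "{\<omega>\<in>space M. X f \<omega>} \<in> sets (Sig {SrcX f})"
  proof -
    note [measurable] = meas_SigX[of f "{SrcX f}"]
    have "{\<omega>\<in>space (Sig {SrcX f}). X f \<omega>} \<in> sets (Sig {SrcX f})" by measurable
    then show ?thesis by (simp add: space_Sig)
  qed
  have b: "{\<omega>\<in>space M. Y f \<omega> \<le> s} \<in> sets (Sig {SrcY f})"
  proof -
    note [measurable] = meas_SigY[of f "{SrcY f}"]
    have "{\<omega>\<in>space (Sig {SrcY f}). Y f \<omega> \<le> s} \<in> sets (Sig {SrcY f})" by measurable
    then show ?thesis by (simp add: space_Sig)
  qed
  have "prob ({\<omega>\<in>space M. X f \<omega>} \<inter> {\<omega>\<in>space M. Y f \<omega> \<le> s})
      = prob {\<omega>\<in>space M. X f \<omega>} * prob {\<omega>\<in>space M. Y f \<omega> \<le> s}"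
    by (rule indep2D[OF _ _ _ a b]) (use assms in \<open>auto simp: I0_def\<close>)
  moreover have "{\<omega>\<in>space M. X f \<omega>} \<inter> {\<omega>\<in>space M. Y f \<omega> \<le> s} = {\<omega>\<in>space M. X f \<omega> \<and> Y f \<omega> \<le> s}"
    by auto
  ultimately show ?thesis using X_prob assms by simp
qed

lemma prob_noadd:
  assumes B: "B \<subseteq> E"
  shows "prob {\<omega>\<in>space M. ereal s < R B \<omega>} = (\<Prod>f\<in>D \<inter> B. 1 - p f * prob {\<omega>\<in>space M. Y f \<omega> \<le> s})"
proof -
  define J where "J = D \<inter> B"
  have JE: "J \<subseteq> E" "finite J" using D_props B unfolding J_def by auto
  have set_eq: "{\<omega>\<in>space M. ereal s < R B \<omega>} = {\<omega>\<in>space M. \<forall>f\<in>J. \<not> (X f \<omega> \<and> Y f \<omega> \<le> s)}"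
    using R_less unfolding J_def by (auto simp: not_le)
  show ?thesis
  proof (cases "J = {}")
    case True
    then show ?thesis unfolding set_eq by (simp add: J_def[symmetric] prob_space)
  next
    case False
    define A where "A f = {\<omega>\<in>space M. \<not> (X f \<omega> \<and> Y f \<omega> \<le> s)}" for f
    have ind: "indep_sets (\<lambda>f. sets (Sig {SrcY f, SrcX f})) J"
      by (rule indep_family) (use JE in \<open>auto simp: disjoint_family_on_def I0_def\<close>)
    have "prob (\<Inter>f\<in>J. A f) = (\<Prod>f\<in>J. prob (A f))"
    proof (rule indep_setsD[OF ind subset_refl False JE(2)], rule ballI)
      fix f assume "f \<in> J"
      show "A f \<in> sets (Sig {SrcY f, SrcX f})" unfolding A_def by (rule Sig_event_YX) auto
    qed
    moreover have "(\<Inter>f\<in>J. A f) = {\<omega>\<in>space M. \<forall>f\<in>J. \<not> (X f \<omega> \<and> Y f \<omega> \<le> s)}"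
      using False unfolding A_def by auto
    moreover have "prob (A f) = 1 - p f * prob {\<omega>\<in>space M. Y f \<omega> \<le> s}" if "f \<in> J" for f
    proof -
      have fE: "f \<in> E" using that JE by auto
      have "A f = space M - {\<omega>\<in>space M. X f \<omega> \<and> Y f \<omega> \<le> s}" unfolding A_def by auto
      moreover have "{\<omega>\<in>space M. X f \<omega> \<and> Y f \<omega> \<le> s} \<in> events" using fE by measurable
      ultimately show ?thesis using prob_compl prob_XY[OF fE] by simp
    qed
    ultimately show ?thesis unfolding set_eq J_def by simp
  qed
qed

lemma expLp:
  fixes q :: real
  assumes "0 < q" "q < 1"
  shows "exp (- q * ((1 / q) * ln (1 / (1 - q)))) = 1 - q"
proof -
  have l: "ln (1 / (1 - q)) = - ln (1 - q)" using assms by (subst ln_div) auto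
  have "- q * ((1 / q) * ln (1 / (1 - q))) = ln (1 - q)" using assms unfolding l by (simp add: field_simps)
  then show ?thesis using assms by simp
qed

lemma factor_bound:
  assumes fE: "f \<in> E" and s: "0 \<le> s"
  shows "exp (- p f * s) \<le> 1 - p f * prob {\<omega>\<in>space M. Y f \<omega> \<le> s}"
proof -
  have pf: "0 < p f" "p f \<le> 1" using p_range fE by auto
  define L where "L = (1 / p f) * ln (1 / (1 - p f))"
  show ?thesis
  proof (cases "p f = 1 \<or> s \<le> L")
    case True
    then have "prob {\<omega>\<in>space M. Y f \<omega> \<le> s} = (1 / p f) * (1 - exp (- p f * s))"
      using Y_cdf fE s unfolding L_def by auto
    then show ?thesis using pf by simp
  next
    case False
    then have pl: "p f < 1" "L < s" using pf by auto
    have "exp (- p f * s) \<le> exp (- p f * L)" using pl pf by simp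
    also have "\<dots> = 1 - p f" unfolding L_def by (rule expLp[OF pf(1) pl(1)])
    also have "\<dots> \<le> 1 - p f * prob {\<omega>\<in>space M. Y f \<omega> \<le> s}"
      using pf by (simp add: mult_left_le)
    finally show ?thesis .
  qed
qed

lemma noadd_bound:
  assumes B: "B \<subseteq> E" and s: "0 \<le> s"
  shows "exp (- s * sB B) \<le> prob {\<omega>\<in>space M. ereal s < R B \<omega>}"
proof -
  have fin: "finite (D \<inter> B)" using D_props by auto
  have "exp (- s * sB B) = (\<Prod>f\<in>D \<inter> B. exp (- p f * s))"
    unfolding sB_def by (simp add: exp_sum[OF fin, symmetric] sum_distrib_left sum_negf mult.commute)
  also have "\<dots> \<le> (\<Prod>f\<in>D \<inter> B. 1 - p f * prob {\<omega>\<in>space M. Y f \<omega> \<le> s})"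
    by (rule prod_mono) (use factor_bound B s D_props in auto)
  also have "\<dots> = prob {\<omega>\<in>space M. ereal s < R B \<omega>}" using prob_noadd[OF B] by simp
  finally show ?thesis .
qed

lemma sig_sub:
  assumes "h \<in> measurable (Sig P) K"
  shows "sigma_sets (space M) {h -` A \<inter> space M | A. A \<in> sets K} \<subseteq> sets (Sig P)"
proof -
  have "{h -` A \<inter> space M | A. A \<in> sets K} \<subseteq> sets (Sig P)"
    using measurable_sets[OF assms] by (auto simp: space_Sig)
  from sets.sigma_sets_subset[OF this] show ?thesis by (simp add: space_Sig)
qed

lemma indep_TR:
  assumes B: "B \<subseteq> E"
  shows "indep_var borel (\<lambda>\<omega>. ereal (Y e \<omega>)) borel (R B)"
proof -
  let ?P = "{SrcY e}" and ?Q = "SrcY ` (D \<inter> B) \<union> SrcX ` (D \<inter> B)"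
  have ind: "indep_set (sets (Sig ?P)) (sets (Sig ?Q))"
    by (rule indep2) (use D_props eE in \<open>auto simp: I0_def\<close>)
  have mT: "(\<lambda>\<omega>. ereal (Y e \<omega>)) \<in> borel_measurable (Sig ?P)"
    using meas_SigY[of e ?P] by measurable
  have mR: "R B \<in> borel_measurable (Sig ?Q)" by (rule R_meas) simp
  show ?thesis unfolding indep_var_eq
  proof (intro conjI)
    show "random_variable borel (\<lambda>\<omega>. ereal (Y e \<omega>))" using eE by measurable
    show "random_variable borel (R B)" by (rule R_measM)
    show "indep_set (sigma_sets (space M) {(\<lambda>\<omega>. ereal (Y e \<omega>)) -` A \<inter> space M |A. A \<in> sets borel})
       (sigma_sets (space M) {R B -` A \<inter> space M |A. A \<in> sets borel})"
      using ind unfolding indep_set_def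
      by (rule indep_sets_mono_sets) (use sig_sub[OF mT] sig_sub[OF mR] in \<open>auto split: bool.splits\<close>)
  qed
qed

definition Tp where "Tp \<omega> = max 0 (Y e \<omega>)"
definition c1 where "c1 = expectation (\<lambda>\<omega>. exp (-2 * Tp \<omega>))"
definition c2 where "c2 = expectation (\<lambda>\<omega>. Tp \<omega> * exp (-2 * Tp \<omega>))"

lemma Tp_meas[measurable]: "Tp \<in> borel_measurable M"
  unfolding Tp_def using eE by measurable

lemma Tp_nonneg: "0 \<le> Tp \<omega>" unfolding Tp_def by simp

lemma te_bound: "0 \<le> (z::real) \<Longrightarrow> z * exp (-2 * z) \<le> 1"
proof -
  assume t: "0 \<le> z"
  have "1 + 2 * z \<le> exp (2 * z)" by (rule exp_ge_add_one_self)
  then have "z \<le> exp (2 * z)" using t by linarith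
  then have "z * exp (-2 * z) \<le> exp (2 * z) * exp (-2 * z)"
    by (rule mult_right_mono) simp
  also have "exp (2 * z) * exp (-2 * z) = 1" by (simp add: exp_add[symmetric])
  finally show ?thesis .
qed

lemma int1: "integrable M (\<lambda>\<omega>. exp (-2 * Tp \<omega>))"
proof (rule integrable_const_bound[where B=1])
  show "AE \<omega> in M. norm (exp (-2 * Tp \<omega>)) \<le> 1"
    by (intro AE_I2) (simp add: Tp_nonneg)
  show "(\<lambda>\<omega>. exp (-2 * Tp \<omega>)) \<in> borel_measurable M" by measurable
qed

lemma int2: "integrable M (\<lambda>\<omega>. Tp \<omega> * exp (-2 * Tp \<omega>))"
proof (rule integrable_const_bound[where B=1])
  show "AE \<omega> in M. norm (Tp \<omega> * exp (-2 * Tp \<omega>)) \<le> 1"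
  proof (intro AE_I2)
    fix \<omega>
    have "norm (Tp \<omega> * exp (-2 * Tp \<omega>)) = Tp \<omega> * exp (-2 * Tp \<omega>)"
      using Tp_nonneg[of \<omega>] by simp
    then show "norm (Tp \<omega> * exp (-2 * Tp \<omega>)) \<le> 1" using te_bound[OF Tp_nonneg] by simp
  qed
  show "(\<lambda>\<omega>. Tp \<omega> * exp (-2 * Tp \<omega>)) \<in> borel_measurable M" by measurable
qed

lemma c2_nonneg: "0 \<le> c2"
  unfolding c2_def by (rule integral_nonneg_AE) (use Tp_nonneg in auto)

lemma c1_nonneg: "0 \<le> c1"
  unfolding c1_def by (rule integral_nonneg_AE) auto

lemma tangent:
  fixes z s :: real
  assumes "0 \<le> z"
  shows "exp (-2 * z) + (2 - s) * (z * exp (-2 * z)) \<le> exp (- z * s)"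
proof -
  have "exp (- z * s) = exp (-2 * z) * exp (z * (2 - s))"
    by (simp add: exp_add[symmetric] algebra_simps)
  moreover have "1 + z * (2 - s) \<le> exp (z * (2 - s))" by (rule exp_ge_add_one_self)
  ultimately have "exp (-2 * z) * (1 + z * (2 - s)) \<le> exp (- z * s)"
    by (simp add: mult_left_mono)
  then show ?thesis by (simp add: algebra_simps)
qed

lemma sB_nonneg: "B \<subseteq> E \<Longrightarrow> 0 \<le> sB B"
  unfolding sB_def by (rule sum_nonneg) (use p_range D_props in \<open>auto simp: less_imp_le\<close>)

lemma main_B:
  assumes B: "B \<subseteq> E"
  shows "c1 + (2 - sB B) * c2 \<le> prob {\<omega>\<in>space M. ereal (Y e \<omega>) < R B \<omega>}"
proof -
  define Te where "Te = (\<lambda>\<omega>. ereal (Y e \<omega>))"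
  define k where "k t = exp (- (max 0 t) * sB B)" for t
  have Te_meas[measurable]: "Te \<in> borel_measurable M" unfolding Te_def using eE by measurable
  have k_meas[measurable]: "k \<in> borel_measurable borel" unfolding k_def by measurable
  have s0: "0 \<le> sB B" using sB_nonneg[OF B] .
  have kint: "integrable M (\<lambda>\<omega>. k (Y e \<omega>))"
    by (rule integrable_const_bound[where B=1]) (use s0 eE in \<open>auto simp: k_def\<close>)
  have step1: "emeasure M {\<omega>\<in>space M. Te \<omega> < R B \<omega>}
      = (\<integral>\<^sup>+t. emeasure M {\<omega>\<in>space M. t < R B \<omega>} \<partial>distr M borel Te)"
    unfolding Te_def by (rule indep_lt[OF indep_TR[OF B]])
  have AEt: "AE t in distr M borel Te. 0 \<le> t \<and> t \<noteq> \<infinity>"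
  proof (subst AE_distr_iff)
    show "AE \<omega> in M. 0 \<le> Te \<omega> \<and> Te \<omega> \<noteq> \<infinity>"
      using Y_range eE by (auto simp: Te_def elim!: AE_mp)
  qed auto
  have step2: "(\<integral>\<^sup>+t. ennreal (k (real_of_ereal t)) \<partial>distr M borel Te)
      \<le> (\<integral>\<^sup>+t. emeasure M {\<omega>\<in>space M. t < R B \<omega>} \<partial>distr M borel Te)"
  proof (rule nn_integral_mono_AE)
    show "AE t in distr M borel Te. ennreal (k (real_of_ereal t)) \<le> emeasure M {\<omega>\<in>space M. t < R B \<omega>}"
      using AEt
    proof (rule AE_mp, intro AE_I2 impI)
      fix t :: ereal assume t: "0 \<le> t \<and> t \<noteq> \<infinity>"
      then obtain r where r: "t = ereal r" "0 \<le> r" by (cases t) auto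
      have "k r \<le> prob {\<omega>\<in>space M. ereal r < R B \<omega>}"
        using noadd_bound[OF B r(2)] r(2) by (simp add: k_def)
      then show "ennreal (k (real_of_ereal t)) \<le> emeasure M {\<omega>\<in>space M. t < R B \<omega>}"
        using r by (simp add: emeasure_eq_measure)
    qed
  qed
  have step3: "(\<integral>\<^sup>+t. ennreal (k (real_of_ereal t)) \<partial>distr M borel Te) = (\<integral>\<^sup>+\<omega>. ennreal (k (Y e \<omega>)) \<partial>M)"
    by (subst nn_integral_distr[OF Te_meas]) (auto simp: Te_def)
  have step4: "(\<integral>\<^sup>+\<omega>. ennreal (k (Y e \<omega>)) \<partial>M) = ennreal (\<integral>\<omega>. k (Y e \<omega>) \<partial>M)"
    by (rule nn_integral_eq_integral[OF kint]) (auto simp: k_def)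
  have "ennreal (\<integral>\<omega>. k (Y e \<omega>) \<partial>M) = (\<integral>\<^sup>+t. ennreal (k (real_of_ereal t)) \<partial>distr M borel Te)"
    using step3 step4 by simp
  also have "\<dots> \<le> emeasure M {\<omega>\<in>space M. Te \<omega> < R B \<omega>}"
    using step2 step1 by simp
  also have "\<dots> = ennreal (prob {\<omega>\<in>space M. Te \<omega> < R B \<omega>})"
    by (rule emeasure_eq_measure)
  finally have "ennreal (\<integral>\<omega>. k (Y e \<omega>) \<partial>M) \<le> ennreal (prob {\<omega>\<in>space M. Te \<omega> < R B \<omega>})" .
  then have kle: "(\<integral>\<omega>. k (Y e \<omega>) \<partial>M) \<le> prob {\<omega>\<in>space M. Te \<omega> < R B \<omega>}"
    by (simp add: ennreal_le_iff)
  have "c1 + (2 - sB B) * c2 = (\<integral>\<omega>. exp (-2 * Tp \<omega>) + (2 - sB B) * (Tp \<omega> * exp (-2 * Tp \<omega>)) \<partial>M)"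
    unfolding c1_def c2_def using int1 int2 by simp
  also have "\<dots> \<le> (\<integral>\<omega>. k (Y e \<omega>) \<partial>M)"
  proof (rule integral_mono)
    show "integrable M (\<lambda>\<omega>. exp (-2 * Tp \<omega>) + (2 - sB B) * (Tp \<omega> * exp (-2 * Tp \<omega>)))"
      using int1 int2 by simp
    show "integrable M (\<lambda>\<omega>. k (Y e \<omega>))" by (rule kint)
    fix \<omega>
    show "exp (-2 * Tp \<omega>) + (2 - sB B) * (Tp \<omega> * exp (-2 * Tp \<omega>)) \<le> k (Y e \<omega>)"
      using tangent[OF Tp_nonneg[of \<omega>], of "sB B"] unfolding k_def Tp_def by simp
  qed
  finally show ?thesis using kle unfolding Te_def by simp
qed

lemma EhatmeasM[measurable]: "Ehat \<in> measurable M (count_space UNIV)"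
  by (rule Ehat_meas)

lemma ev_EB: "{\<omega>\<in>space M. Ehat \<omega> = B} \<in> events"
  by measurable

lemma ev_TR: "{\<omega>\<in>space M. ereal (Y e \<omega>) < R B \<omega>} \<in> events"
proof -
  note [measurable] = R_measM[of B]
  show ?thesis using eE by measurable
qed

lemma prob_piece:
  assumes B: "B \<subseteq> E"
  shows "prob ({\<omega>\<in>space M. Ehat \<omega> = B} \<inter> {\<omega>\<in>space M. ereal (Y e \<omega>) < R B \<omega>})
       = prob {\<omega>\<in>space M. Ehat \<omega> = B} * prob {\<omega>\<in>space M. ereal (Y e \<omega>) < R B \<omega>}"
proof -
  let ?P = "{SrcE}" and ?Q = "insert (SrcY e) (SrcY ` (D \<inter> B) \<union> SrcX ` (D \<inter> B))"
  have a: "{\<omega>\<in>space M. Ehat \<omega> = B} \<in> sets (Sig ?P)"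
  proof -
    note [measurable] = meas_SigE[of ?P]
    have "{\<omega>\<in>space (Sig ?P). Ehat \<omega> = B} \<in> sets (Sig ?P)" by measurable
    then show ?thesis by (simp add: space_Sig)
  qed
  have b: "{\<omega>\<in>space M. ereal (Y e \<omega>) < R B \<omega>} \<in> sets (Sig ?Q)"
  proof -
    have mY: "Y e \<in> borel_measurable (Sig ?Q)" by (rule meas_SigY) simp
    have mR: "R B \<in> borel_measurable (Sig ?Q)" by (rule R_meas) auto
    note [measurable] = mY mR
    have "{\<omega>\<in>space (Sig ?Q). ereal (Y e \<omega>) < R B \<omega>} \<in> sets (Sig ?Q)" by measurable
    then show ?thesis by (simp add: space_Sig)
  qed
  show ?thesis
    by (rule indep2D[OF _ _ _ a b]) (use B D_props eE in \<open>auto simp: I0_def\<close>)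
qed

lemma sumE:
  "prob {\<omega>\<in>space M. Pd (Ehat \<omega>)} = (\<Sum>B\<in>Pow E. if Pd B then prob {\<omega>\<in>space M. Ehat \<omega> = B} else 0)"
proof -
  have eq: "{\<omega>\<in>space M. Pd (Ehat \<omega>)} = (\<Union>B\<in>{B\<in>Pow E. Pd B}. {\<omega>\<in>space M. Ehat \<omega> = B})"
    using Ehat_sub by auto
  have "prob (\<Union>B\<in>{B\<in>Pow E. Pd B}. {\<omega>\<in>space M. Ehat \<omega> = B})
      = (\<Sum>B\<in>{B\<in>Pow E. Pd B}. prob {\<omega>\<in>space M. Ehat \<omega> = B})"
    by (rule measure_finite_Union) (use finE in \<open>auto simp: disjoint_family_on_def ev_EB\<close>)
  also have "\<dots> = (\<Sum>B\<in>Pow E. if Pd B then prob {\<omega>\<in>space M. Ehat \<omega> = B} else 0)"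
    by (rule sum.inter_filter) (simp add: finE)
  finally show ?thesis using eq by simp
qed

definition Aev where
  "Aev = {\<omega>\<in>space M. e \<in> Ehat \<omega> \<and> (\<forall>f\<in>D \<inter> Ehat \<omega>. X f \<omega> \<longrightarrow> Y e \<omega> < Y f \<omega>)}"

lemma Aev_eq: "Aev = (\<Union>B\<in>{B\<in>Pow E. e \<in> B}. {\<omega>\<in>space M. Ehat \<omega> = B} \<inter> {\<omega>\<in>space M. ereal (Y e \<omega>) < R B \<omega>})"
  unfolding Aev_def using Ehat_sub R_less by auto

lemma prob_Aev:
  "prob Aev = (\<Sum>B\<in>{B\<in>Pow E. e \<in> B}. prob {\<omega>\<in>space M. Ehat \<omega> = B} * prob {\<omega>\<in>space M. ereal (Y e \<omega>) < R B \<omega>})"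
proof -
  have "prob Aev = (\<Sum>B\<in>{B\<in>Pow E. e \<in> B}. prob ({\<omega>\<in>space M. Ehat \<omega> = B} \<inter> {\<omega>\<in>space M. ereal (Y e \<omega>) < R B \<omega>}))"
    unfolding Aev_eq
    by (rule measure_finite_Union) (use finE in \<open>auto simp: disjoint_family_on_def ev_EB ev_TR\<close>)
  also have "\<dots> = (\<Sum>B\<in>{B\<in>Pow E. e \<in> B}. prob {\<omega>\<in>space M. Ehat \<omega> = B} * prob {\<omega>\<in>space M. ereal (Y e \<omega>) < R B \<omega>})"
    by (rule sum.cong) (auto intro: prob_piece)
  finally show ?thesis .
qed

lemma x_nonneg: "f \<in> E \<Longrightarrow> 0 \<le> x f"
  using feas unfolding lp_bip_feasible_def by auto

lemma pair_bound:
  assumes fD: "f \<in> D"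
  shows "prob {\<omega>\<in>space M. e \<in> Ehat \<omega> \<and> f \<in> Ehat \<omega>} \<le> x e * x f"
proof -
  have fE: "f \<in> E" "f \<noteq> e" "f \<inter> e \<noteq> {}" using fD unfolding D_def delta_e_def by auto
  then obtain v where v: "v \<in> f" "v \<in> e" by auto
  have "e \<subseteq> V" using bip eE unfolding bipartite_graph_def by auto
  then have vV: "v \<in> V" using v by auto
  have Ssub: "{e, f} \<subseteq> delta_v E v" using v fE eE unfolding delta_v_def by auto
  have "measure M {\<omega> \<in> space M. \<forall>g\<in>{e, f}. (g \<in> Ehat \<omega>) = True}
      \<le> (\<Prod>g\<in>{e, f}. measure M {\<omega> \<in> space M. (g \<in> Ehat \<omega>) = True})"
    using negcor vV Ssub by blast
  moreover have "{\<omega> \<in> space M. \<forall>g\<in>{e, f}. (g \<in> Ehat \<omega>) = True} = {\<omega>\<in>space M. e \<in> Ehat \<omega> \<and> f \<in> Ehat \<omega>}"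
    by auto
  moreover have "(\<Prod>g\<in>{e, f}. measure M {\<omega> \<in> space M. (g \<in> Ehat \<omega>) = True}) = x e * x f"
    using fE eE marg by simp
  ultimately show ?thesis by simp
qed

lemma sumD_bound: "(\<Sum>f\<in>D. p f * x f) \<le> 2"
proof -
  have "e \<subseteq> V" "card e = 2" using bip eE unfolding bipartite_graph_def by auto
  then obtain u w where uw: "e = {u, w}" "u \<noteq> w" by (auto simp: card_2_iff)
  have uV: "u \<in> V" "w \<in> V" using \<open>e \<subseteq> V\<close> uw by auto
  have nn: "0 \<le> p f * x f" if "f \<in> E" for f using p_range x_nonneg that by (simp add: less_imp_le)
  have fin: "finite (delta_v E u)" "finite (delta_v E w)" using finE unfolding delta_v_def by auto
  have sub: "D \<subseteq> delta_v E u \<union> delta_v E w"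
  proof
    fix f assume "f \<in> D"
    then have "f \<in> E" "f \<inter> e \<noteq> {}" unfolding D_def delta_e_def by auto
    then show "f \<in> delta_v E u \<union> delta_v E w" using uw by (auto simp: delta_v_def)
  qed
  have "(\<Sum>f\<in>D. p f * x f) \<le> (\<Sum>f\<in>delta_v E u \<union> delta_v E w. p f * x f)"
    by (rule sum_mono2) (use fin sub nn in \<open>auto simp: delta_v_def\<close>)
  also have "\<dots> \<le> (\<Sum>f\<in>delta_v E u. p f * x f) + (\<Sum>f\<in>delta_v E w. p f * x f)"
  proof -
    have "(\<Sum>f\<in>delta_v E u \<union> delta_v E w. p f * x f) + (\<Sum>f\<in>delta_v E u \<inter> delta_v E w. p f * x f)
        = (\<Sum>f\<in>delta_v E u. p f * x f) + (\<Sum>f\<in>delta_v E w. p f * x f)"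
      by (rule sum.union_inter) (use fin in auto)
    moreover have "0 \<le> (\<Sum>f\<in>delta_v E u \<inter> delta_v E w. p f * x f)"
      by (rule sum_nonneg) (use nn in \<open>auto simp: delta_v_def\<close>)
    ultimately show ?thesis by linarith
  qed
  also have "\<dots> \<le> 1 + 1" using feas uV unfolding lp_bip_feasible_def by (intro add_mono) auto
  finally show ?thesis by simp
qed

lemma sum_PB_sB: "(\<Sum>B\<in>{B\<in>Pow E. e \<in> B}. prob {\<omega>\<in>space M. Ehat \<omega> = B} * sB B) \<le> 2 * x e"
proof -
  let ?S = "{B\<in>Pow E. e \<in> B}"
  let ?PB = "\<lambda>B. prob {\<omega>\<in>space M. Ehat \<omega> = B}"
  have finS: "finite ?S" using finE by auto
  have "(\<Sum>B\<in>?S. ?PB B * sB B) = (\<Sum>B\<in>?S. \<Sum>f\<in>D. p f * (if f \<in> B then ?PB B else 0))"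
  proof (rule sum.cong[OF refl])
    fix B
    have "sB B = (\<Sum>f\<in>D. if f \<in> B then p f else 0)"
      unfolding sB_def using D_props by (simp add: sum.inter_restrict)
    then show "?PB B * sB B = (\<Sum>f\<in>D. p f * (if f \<in> B then ?PB B else 0))"
      by (auto simp: sum_distrib_right mult.commute intro!: sum.cong)
  qed
  also have "\<dots> = (\<Sum>f\<in>D. p f * (\<Sum>B\<in>?S. if f \<in> B then ?PB B else 0))"
    by (subst sum.swap) (simp add: sum_distrib_left)
  also have "\<dots> = (\<Sum>f\<in>D. p f * prob {\<omega>\<in>space M. e \<in> Ehat \<omega> \<and> f \<in> Ehat \<omega>})"
  proof (rule sum.cong[OF refl])
    fix f
    have "(\<Sum>B\<in>?S. if f \<in> B then ?PB B else 0) = (\<Sum>B\<in>Pow E. if e \<in> B then (if f \<in> B then ?PB B else 0) else 0)"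
      by (rule sum.inter_filter) (simp add: finE)
    also have "\<dots> = (\<Sum>B\<in>Pow E. if e \<in> B \<and> f \<in> B then ?PB B else 0)"
      by (rule sum.cong) auto
    also have "\<dots> = prob {\<omega>\<in>space M. e \<in> Ehat \<omega> \<and> f \<in> Ehat \<omega>}"
      using sumE[of "\<lambda>B. e \<in> B \<and> f \<in> B"] by simp
    finally show "p f * (\<Sum>B\<in>?S. if f \<in> B then ?PB B else 0) = p f * prob {\<omega>\<in>space M. e \<in> Ehat \<omega> \<and> f \<in> Ehat \<omega>}"
      by simp
  qed
  also have "\<dots> \<le> (\<Sum>f\<in>D. p f * (x e * x f))"
    by (rule sum_mono, rule mult_left_mono) (use pair_bound p_range D_props in \<open>auto simp: less_imp_le\<close>)
  also have "\<dots> = x e * (\<Sum>f\<in>D. p f * x f)"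
    by (simp add: sum_distrib_left algebra_simps)
  also have "\<dots> \<le> x e * 2"
    by (rule mult_left_mono[OF sumD_bound x_nonneg[OF eE]])
  finally show ?thesis by simp
qed

lemma sum_PB: "(\<Sum>B\<in>{B\<in>Pow E. e \<in> B}. prob {\<omega>\<in>space M. Ehat \<omega> = B}) = x e"
proof -
  have "(\<Sum>B\<in>{B\<in>Pow E. e \<in> B}. prob {\<omega>\<in>space M. Ehat \<omega> = B})
      = (\<Sum>B\<in>Pow E. if e \<in> B then prob {\<omega>\<in>space M. Ehat \<omega> = B} else 0)"
    by (rule sum.inter_filter) (simp add: finE)
  also have "\<dots> = prob {\<omega>\<in>space M. e \<in> Ehat \<omega>}" using sumE[of "\<lambda>B. e \<in> B"] by simp
  finally show ?thesis using marg eE by simp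
qed

lemma Aev_bound: "c1 * x e \<le> prob Aev"
proof -
  let ?S = "{B\<in>Pow E. e \<in> B}"
  let ?PB = "\<lambda>B. prob {\<omega>\<in>space M. Ehat \<omega> = B}"
  have "(\<Sum>B\<in>?S. ?PB B * (c1 + (2 - sB B) * c2)) \<le> prob Aev"
    unfolding prob_Aev
    by (rule sum_mono, rule mult_left_mono) (auto intro: main_B)
  moreover have "(\<Sum>B\<in>?S. ?PB B * (c1 + (2 - sB B) * c2))
      = (c1 + 2 * c2) * (\<Sum>B\<in>?S. ?PB B) - c2 * (\<Sum>B\<in>?S. ?PB B * sB B)"
    by (simp add: sum_distrib_left sum_subtractf algebra_simps)
  moreover have "c2 * (\<Sum>B\<in>?S. ?PB B * sB B) \<le> c2 * (2 * x e)"
    by (rule mult_left_mono[OF sum_PB_sB c2_nonneg])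
  ultimately show ?thesis unfolding sum_PB by (simp add: algebra_simps)
qed

definition Ssafe where
  "Ssafe = {\<omega>\<in>space M. safe E (Ehat \<omega>) (\<lambda>f. Y f \<omega>) r (\<lambda>f. X f \<omega>) e}"

lemma Aev_sub: "Aev \<subseteq> Ssafe"
proof
  fix \<omega> assume a: "\<omega> \<in> Aev"
  then have sp: "\<omega> \<in> space M" and eEh: "e \<in> Ehat \<omega>"
    and cond: "\<forall>f\<in>D \<inter> Ehat \<omega>. X f \<omega> \<longrightarrow> Y e \<omega> < Y f \<omega>" unfolding Aev_def by auto
  have sub: "Ehat \<omega> \<subseteq> E" using Ehat_sub sp by auto
  have "safe E (Ehat \<omega>) (\<lambda>f. Y f \<omega>) r (\<lambda>f. X f \<omega>) e"
    by (rule safe_suff) (use sub finE r_inj eEh cond in \<open>auto simp: D_def intro: finite_subset inj_on_subset\<close>)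
  then show "\<omega> \<in> Ssafe" using sp unfolding Ssafe_def by auto
qed

definition cd where
  "cd \<omega> = (Ehat \<omega>, {(f, g)\<in>E \<times> E. Y f \<omega> \<le> Y g \<omega>}, {f\<in>E. X f \<omega>})"

lemma cd_event:
  assumes c: "c \<in> Pow E \<times> Pow (E \<times> E) \<times> Pow E"
  shows "{\<omega>\<in>space M. cd \<omega> = c} \<in> events"
proof -
  obtain a b d where abd: "c = (a, b, d)" by (cases c) auto
  have bsub: "b \<subseteq> E \<times> E" "d \<subseteq> E" using c abd by auto
  have eq: "{\<omega>\<in>space M. cd \<omega> = c} = {\<omega>\<in>space M. Ehat \<omega> = a}
      \<inter> {\<omega>\<in>space M. \<forall>fg\<in>E \<times> E. (fg \<in> b) = (Y (fst fg) \<omega> \<le> Y (snd fg) \<omega>)}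
      \<inter> {\<omega>\<in>space M. \<forall>f\<in>E. (f \<in> d) = X f \<omega>}"
    using bsub unfolding cd_def abd by auto
  have e1: "{\<omega>\<in>space M. Ehat \<omega> = a} \<in> events" by measurable
  have e2: "{\<omega>\<in>space M. \<forall>fg\<in>E \<times> E. (fg \<in> b) = (Y (fst fg) \<omega> \<le> Y (snd fg) \<omega>)} \<in> events"
  proof (rule sets.sets_Collect_finite_All)
    fix fg assume "fg \<in> E \<times> E"
    then obtain f g where fg: "fg = (f, g)" "f \<in> E" "g \<in> E" by auto
    have m1: "{\<omega>\<in>space M. Y f \<omega> \<le> Y g \<omega>} \<in> events" using fg(2,3) by measurable
    have m2: "{\<omega>\<in>space M. \<not> Y f \<omega> \<le> Y g \<omega>} \<in> events" using fg(2,3) by measurable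
    show "{\<omega>\<in>space M. (fg \<in> b) = (Y (fst fg) \<omega> \<le> Y (snd fg) \<omega>)} \<in> events"
      unfolding fg(1) using m1 m2 by (cases "(f, g) \<in> b") simp_all
  qed (use finE in auto)
  have e3: "{\<omega>\<in>space M. \<forall>f\<in>E. (f \<in> d) = X f \<omega>} \<in> events"
  proof (rule sets.sets_Collect_finite_All)
    fix f assume f: "f \<in> E"
    have m1: "{\<omega>\<in>space M. X f \<omega>} \<in> events" using f by measurable
    have m2: "{\<omega>\<in>space M. \<not> X f \<omega>} \<in> events" using f by measurable
    show "{\<omega>\<in>space M. (f \<in> d) = X f \<omega>} \<in> events"
      using m1 m2 by (cases "f \<in> d") simp_all
  qed (use finE in auto)
  show ?thesis unfolding eq using e1 e2 e3 by auto
qed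

lemma safe_same:
  assumes "\<omega> \<in> space M" "\<omega>' \<in> space M" "cd \<omega> = cd \<omega>'"
  shows "safe E (Ehat \<omega>) (\<lambda>f. Y f \<omega>) r (\<lambda>f. X f \<omega>) e = safe E (Ehat \<omega>') (\<lambda>f. Y f \<omega>') r (\<lambda>f. X f \<omega>') e"
proof -
  have eh: "Ehat \<omega> = Ehat \<omega>'" and
    yy: "{(f, g)\<in>E \<times> E. Y f \<omega> \<le> Y g \<omega>} = {(f, g)\<in>E \<times> E. Y f \<omega>' \<le> Y g \<omega>'}" and
    xx: "{f\<in>E. X f \<omega>} = {f\<in>E. X f \<omega>'}"
    using assms(3) unfolding cd_def by auto
  have sub: "Ehat \<omega> \<subseteq> E" using Ehat_sub assms(1) by auto
  show ?thesis unfolding eh[symmetric]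
  proof (rule safe_cong)
    show "finite (Ehat \<omega>)" using sub finE by (auto intro: finite_subset)
    show "inj_on r (Ehat \<omega>)" using sub r_inj by (auto intro: inj_on_subset)
    show "Ehat \<omega> \<subseteq> E" by (rule sub)
    fix f g assume "f \<in> E" "g \<in> E"
    then show "(Y f \<omega> \<le> Y g \<omega>) = (Y f \<omega>' \<le> Y g \<omega>')"
      using yy by (simp add: set_eq_iff) (metis (no_types, lifting) case_prod_conv mem_Collect_eq mem_Sigma_iff)
  next
    fix f assume "f \<in> E"
    then show "X f \<omega> = X f \<omega>'" using xx by (auto simp: set_eq_iff)
  qed
qed

lemma Ssafe_event: "Ssafe \<in> events"
proof -
  let ?C = "Pow E \<times> Pow (E \<times> E) \<times> Pow E"
  have finC: "finite ?C" using finE by auto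
  have cdC: "cd \<omega> \<in> ?C" if "\<omega> \<in> space M" for \<omega>
    using Ehat_sub that unfolding cd_def by auto
  define G where "G = cd ` Ssafe"
  have eq: "Ssafe = (\<Union>c\<in>?C \<inter> G. {\<omega>\<in>space M. cd \<omega> = c})"
  proof
    show "Ssafe \<subseteq> (\<Union>c\<in>?C \<inter> G. {\<omega>\<in>space M. cd \<omega> = c})"
    proof
      fix \<omega> assume "\<omega> \<in> Ssafe"
      then have "\<omega> \<in> space M" "cd \<omega> \<in> G" unfolding G_def Ssafe_def by auto
      then show "\<omega> \<in> (\<Union>c\<in>?C \<inter> G. {\<omega>\<in>space M. cd \<omega> = c})" using cdC by auto
    qed
  next
    show "(\<Union>c\<in>?C \<inter> G. {\<omega>\<in>space M. cd \<omega> = c}) \<subseteq> Ssafe"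
    proof
      fix \<omega> assume "\<omega> \<in> (\<Union>c\<in>?C \<inter> G. {\<omega>\<in>space M. cd \<omega> = c})"
      then obtain \<omega>' where w: "\<omega>' \<in> Ssafe" "\<omega> \<in> space M" "cd \<omega> = cd \<omega>'" unfolding G_def by auto
      then have "\<omega>' \<in> space M" unfolding Ssafe_def by auto
      with w safe_same[OF w(2) this w(3)] show "\<omega> \<in> Ssafe" unfolding Ssafe_def by auto
    qed
  qed
  show ?thesis unfolding eq
    by (rule sets.finite_UN) (use finC cd_event in auto)
qed

end

lemma exp_tail:
  fixes a :: real
  shows "(\<integral>\<^sup>+s. ennreal (2 * exp (-2 * s)) * indicator {a..} s \<partial>lborel) = ennreal (exp (-2 * a))"
proof -
  have "(\<integral>\<^sup>+s. ennreal (2 * exp (-2 * s)) * indicator {a..} s \<partial>lborel) = 0 - (- exp (-2 * a))"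
  proof (rule nn_integral_FTC_atLeast)
    show "(\<lambda>s::real. 2 * exp (-2 * s)) \<in> borel_measurable borel" by measurable
    fix x :: real
    show "((\<lambda>s. - exp (-2 * s)) has_real_derivative 2 * exp (-2 * x)) (at x)"
      by (auto intro!: derivative_eq_intros)
    show "0 \<le> 2 * exp (-2 * x)" by simp
  next
    show "((\<lambda>s::real. - exp (-2 * s)) \<longlongrightarrow> 0) at_top" by real_asymp
  qed
  then show ?thesis by simp
qed

definition lbf :: "real \<Rightarrow> real \<Rightarrow> real" where
  "lbf q s = (if s < 0 then 0 else if q = 1 \<or> s \<le> (1 / q) * ln (1 / (1 - q))
     then 2 * exp (-2 * s) * ((1 / q) * (1 - exp (- q * s))) else 2 * exp (-2 * s))"

lemma lbf_nonneg: "0 < q \<Longrightarrow> 0 \<le> lbf q s"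
  unfolding lbf_def by (auto intro!: mult_nonneg_nonneg)

lemma lbf_int1: "(\<integral>\<^sup>+s. ennreal (lbf 1 s) \<partial>lborel) = ennreal (g 1)"
proof -
  have "(\<integral>\<^sup>+s. ennreal (lbf 1 s) \<partial>lborel) = (\<integral>\<^sup>+s. ennreal (2 * exp (-2 * s) * (1 - exp (- s))) * indicator {0..} s \<partial>lborel)"
    by (rule nn_integral_cong) (auto simp: lbf_def indicator_def)
  also have "\<dots> = ennreal (0 - (\<lambda>s. - exp (-2 * s) + 2/3 * exp (-3 * s)) 0)"
  proof (rule nn_integral_FTC_atLeast)
    show "(\<lambda>s::real. 2 * exp (-2 * s) * (1 - exp (- s))) \<in> borel_measurable borel" by measurable
    fix x :: real
    have "((\<lambda>s. - exp (-2 * s) + 2/3 * exp (-3 * s)) has_real_derivative (2 * exp (-2 * x) - 2 * exp (-3 * x))) (at x)"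
      by (auto intro!: derivative_eq_intros)
    moreover have "2 * exp (-2 * x) - 2 * exp (-3 * x) = 2 * exp (-2 * x) * (1 - exp (- x))"
      by (simp add: algebra_simps mult_exp_exp)
    ultimately show "((\<lambda>s. - exp (-2 * s) + 2/3 * exp (-3 * s)) has_real_derivative 2 * exp (-2 * x) * (1 - exp (- x))) (at x)"
      by simp
    assume "0 \<le> x"
    then show "0 \<le> 2 * exp (-2 * x) * (1 - exp (- x))" by simp
  next
    show "((\<lambda>s::real. - exp (-2 * s) + 2/3 * exp (-3 * s)) \<longlongrightarrow> 0) at_top" by real_asymp
  qed
  also have "\<dots> = ennreal (g 1)" by (simp add: g_def)
  finally show ?thesis .
qed

lemma expLp':
  fixes q :: real
  assumes "0 < q" "q < 1"
  shows "exp (- q * ((1 / q) * ln (1 / (1 - q)))) = 1 - q"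
proof -
  have l: "ln (1 / (1 - q)) = - ln (1 - q)" using assms by (subst ln_div) auto
  have "- q * ((1 / q) * ln (1 / (1 - q))) = ln (1 - q)" using assms unfolding l by (simp add: field_simps)
  then show ?thesis using assms by simp
qed

lemma lbf_int_lt1:
  fixes q :: real
  assumes q: "0 < q" "q < 1"
  shows "(\<integral>\<^sup>+s. ennreal (lbf q s) \<partial>lborel) = ennreal (g q)"
proof -
  define L where "L = (1 / q) * ln (1 / (1 - q))"
  have lnpos: "q \<le> ln (1 / (1 - q))"
  proof -
    have "ln (1 - q) \<le> (1 - q) - 1" using q by (intro ln_le_minus_one) simp
    moreover have "ln (1 / (1 - q)) = - ln (1 - q)" using q by (subst ln_div) auto
    ultimately show ?thesis by simp
  qed
  have L1: "1 \<le> L" unfolding L_def using lnpos q by (simp add: field_simps)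
  have L0: "0 \<le> L" using L1 by simp
  define f1 where "f1 s = 2 * exp (-2 * s) * ((1 / q) * (1 - exp (- q * s)))" for s
  define f2 where "f2 s = 2 * exp (-2 * (s::real))" for s
  define G1 where "G1 s = (1 / q) * (- exp (-2 * s) + (2 / (2 + q)) * exp (- (2 + q) * s))" for s
  have f1nn: "0 \<le> f1 s" if "0 \<le> s" for s using that q unfolding f1_def by (auto intro!: mult_nonneg_nonneg)
  have split: "AE s in lborel. ennreal (lbf q s) = ennreal (f1 s) * indicator {0..L} s + ennreal (f2 s) * indicator {L..} s"
    using AE_lborel_singleton[of L]
  proof (rule AE_mp, intro AE_I2 impI)
    fix s :: real assume "s \<noteq> L"
    then show "ennreal (lbf q s) = ennreal (f1 s) * indicator {0..L} s + ennreal (f2 s) * indicator {L..} s"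
      using q L0 unfolding lbf_def f1_def f2_def L_def[symmetric] by (auto simp: indicator_def)
  qed
  have "(\<integral>\<^sup>+s. ennreal (lbf q s) \<partial>lborel)
      = (\<integral>\<^sup>+s. ennreal (f1 s) * indicator {0..L} s + ennreal (f2 s) * indicator {L..} s \<partial>lborel)"
    by (rule nn_integral_cong_AE[OF split])
  also have "\<dots> = (\<integral>\<^sup>+s. ennreal (f1 s) * indicator {0..L} s \<partial>lborel) + (\<integral>\<^sup>+s. ennreal (f2 s) * indicator {L..} s \<partial>lborel)"
    by (rule nn_integral_add) (auto simp: f1_def f2_def)
  also have "(\<integral>\<^sup>+s. ennreal (f1 s) * indicator {0..L} s \<partial>lborel) = ennreal (G1 L - G1 0)"
  proof (rule nn_integral_FTC_Icc)
    show "f1 \<in> borel_measurable borel" unfolding f1_def by measurable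
    show "0 \<le> L" by (rule L0)
    fix x :: real assume x: "x \<in> {0..L}"
    then show "0 \<le> f1 x" using f1nn by auto
    have "(G1 has_real_derivative (1 / q) * (2 * exp (-2 * x) - 2 * exp (- (2 + q) * x))) (at x)"
      unfolding G1_def
      apply (rule derivative_eq_intros refl)+
      using q(1) apply (simp add: algebra_simps)
      apply (subgoal_tac "0 < q * q + q * 2" "0 < q * (q * q) + (q * 4 + q * (q * 4))")
        apply (simp add: divide_simps algebra_simps)
       apply (intro add_pos_pos mult_pos_pos; simp)
      apply (intro add_pos_pos mult_pos_pos; simp)
      done
    moreover have "(1 / q) * (2 * exp (-2 * x) - 2 * exp (- (2 + q) * x)) = f1 x"
      unfolding f1_def by (simp add: algebra_simps mult_exp_exp)
    ultimately show "(G1 has_real_derivative f1 x) (at x)" by simp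
  qed
  also have "(\<integral>\<^sup>+s. ennreal (f2 s) * indicator {L..} s \<partial>lborel) = ennreal (exp (-2 * L))"
    unfolding f2_def by (rule exp_tail)
  finally have I: "(\<integral>\<^sup>+s. ennreal (lbf q s) \<partial>lborel) = ennreal (G1 L - G1 0) + ennreal (exp (-2 * L))" .
  define a where "a = exp (-2 * L)"
  have qL: "exp (- q * L) = 1 - q" unfolding L_def by (rule expLp'[OF q])
  have b: "exp (- (2 + q) * L) = a * (1 - q)"
    unfolding a_def qL[symmetric] by (simp add: mult_exp_exp algebra_simps)
  have G: "G1 L - G1 0 = (1 - 3 * a) / (2 + q)"
    unfolding G1_def b a_def[symmetric] using q by (simp add: field_simps)
  have a3: "a \<le> 1 / 3"
  proof -
    have "a \<le> exp (-2)" unfolding a_def using L1 by simp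
    moreover have "3 \<le> exp (2::real)" using exp_ge_add_one_self[of 2] by simp
    then have "exp (-2::real) \<le> 1 / 3" by (simp add: exp_minus field_simps)
    ultimately show ?thesis by simp
  qed
  have Gnn: "0 \<le> G1 L - G1 0" unfolding G using a3 q by (simp add: field_simps)
  have "ennreal (G1 L - G1 0) + ennreal (exp (-2 * L)) = ennreal (G1 L - G1 0 + exp (-2 * L))"
    using Gnn by (simp add: ennreal_plus)
  also have "G1 L - G1 0 + exp (-2 * L) = g q"
  proof -
    have "- ((2 + q) / q) * ln (1 / (1 - q)) = - (2 + q) * L" unfolding L_def using q by (simp add: field_simps)
    then have "g q = (1 / (2 + q)) * (1 - a * (1 - q))" unfolding g_def using q b by simp
    then show ?thesis unfolding G a_def[symmetric] using q by (simp add: field_simps)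
  qed
  finally show ?thesis using I by simp
qed

lemma lbf_int:
  fixes q :: real
  assumes "0 < q" "q \<le> 1"
  shows "(\<integral>\<^sup>+s. ennreal (lbf q s) \<partial>lborel) = ennreal (g q)"
  using assms lbf_int1 lbf_int_lt1 by (cases "q = 1") auto

context L2
begin

lemma c1_bound: "g (p e) \<le> c1"
proof -
  define q where "q = p e"
  have q: "0 < q" "q \<le> 1" using p_range eE unfolding q_def by auto
  define L where "L = (1 / q) * ln (1 / (1 - q))"
  interpret S: sigma_finite_measure M by (rule sigma_finite_measure_axioms)
  interpret PS: pair_sigma_finite M lborel ..
  have meas2: "(\<lambda>(\<omega>, s). ennreal (2 * exp (-2 * s)) * indicator {Tp \<omega>..} s) \<in> borel_measurable (M \<Otimes>\<^sub>M lborel)"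
  proof -
    have "(\<lambda>(\<omega>, s). ennreal (2 * exp (-2 * s)) * indicator {Tp \<omega>..} s)
        = (\<lambda>z. ennreal (2 * exp (-2 * snd z)) * (if Tp (fst z) \<le> snd z then 1 else 0))"
      by (auto simp: indicator_def fun_eq_iff)
    moreover have "(\<lambda>z. ennreal (2 * exp (-2 * snd z)) * (if Tp (fst z) \<le> snd z then 1 else 0)) \<in> borel_measurable (M \<Otimes>\<^sub>M lborel)"
      by measurable
    ultimately show ?thesis by simp
  qed
  have "ennreal c1 = (\<integral>\<^sup>+\<omega>. ennreal (exp (-2 * Tp \<omega>)) \<partial>M)"
    unfolding c1_def by (rule nn_integral_eq_integral[OF int1, symmetric]) auto
  also have "\<dots> = (\<integral>\<^sup>+\<omega>. (\<integral>\<^sup>+s. ennreal (2 * exp (-2 * s)) * indicator {Tp \<omega>..} s \<partial>lborel) \<partial>M)"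
    by (rule nn_integral_cong) (rule exp_tail[symmetric])
  also have "\<dots> = (\<integral>\<^sup>+s. (\<integral>\<^sup>+\<omega>. ennreal (2 * exp (-2 * s)) * indicator {Tp \<omega>..} s \<partial>M) \<partial>lborel)"
    using PS.Fubini'[OF meas2] by simp
  also have "\<dots> = (\<integral>\<^sup>+s. ennreal (2 * exp (-2 * s)) * emeasure M {\<omega>\<in>space M. Tp \<omega> \<le> s} \<partial>lborel)"
  proof (rule nn_integral_cong)
    fix s :: real
    have "(\<integral>\<^sup>+\<omega>. ennreal (2 * exp (-2 * s)) * indicator {Tp \<omega>..} s \<partial>M)
        = (\<integral>\<^sup>+\<omega>. ennreal (2 * exp (-2 * s)) * indicator {\<omega>\<in>space M. Tp \<omega> \<le> s} \<omega> \<partial>M)"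
      by (rule nn_integral_cong) (auto simp: indicator_def)
    also have "\<dots> = ennreal (2 * exp (-2 * s)) * emeasure M {\<omega>\<in>space M. Tp \<omega> \<le> s}"
      by (subst nn_integral_cmult) (auto simp: nn_integral_indicator)
    finally show "(\<integral>\<^sup>+\<omega>. ennreal (2 * exp (-2 * s)) * indicator {Tp \<omega>..} s \<partial>M)
        = ennreal (2 * exp (-2 * s)) * emeasure M {\<omega>\<in>space M. Tp \<omega> \<le> s}" .
  qed
  also have "\<dots> \<ge> (\<integral>\<^sup>+s. ennreal (lbf q s) \<partial>lborel)"
  proof (rule nn_integral_mono)
    fix s :: real
    show "ennreal (lbf q s) \<le> ennreal (2 * exp (-2 * s)) * emeasure M {\<omega>\<in>space M. Tp \<omega> \<le> s}"
    proof (cases "s < 0")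
      case True then show ?thesis by (simp add: lbf_def)
    next
      case False
      then have s0: "0 \<le> s" by simp
      have "emeasure M {\<omega>\<in>space M. Y e \<omega> \<le> s} \<le> emeasure M {\<omega>\<in>space M. Tp \<omega> \<le> s}"
        by (rule emeasure_mono) (use s0 evY[OF eE, of s] in \<open>auto simp: Tp_def\<close>)
      then have em: "ennreal (prob {\<omega>\<in>space M. Y e \<omega> \<le> s}) \<le> emeasure M {\<omega>\<in>space M. Tp \<omega> \<le> s}"
        by (simp add: emeasure_eq_measure)
      show ?thesis
      proof (cases "q = 1 \<or> s \<le> L")
        case True
        then have pr: "prob {\<omega>\<in>space M. Y e \<omega> \<le> s} = (1 / q) * (1 - exp (- q * s))"
          using Y_cdf eE s0 unfolding q_def L_def by auto
        have nn: "0 \<le> (1 / q) * (1 - exp (- q * s))" using q s0 by (auto intro!: mult_nonneg_nonneg)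
        have "lbf q s = 2 * exp (-2 * s) * ((1 / q) * (1 - exp (- q * s)))"
          using True s0 unfolding lbf_def L_def[symmetric] by auto
        moreover have "ennreal (2 * exp (-2 * s) * ((1 / q) * (1 - exp (- q * s))))
            = ennreal (2 * exp (-2 * s)) * ennreal ((1 / q) * (1 - exp (- q * s)))"
          by (rule ennreal_mult) (simp, rule nn)
        ultimately have "ennreal (lbf q s) = ennreal (2 * exp (-2 * s)) * ennreal ((1 / q) * (1 - exp (- q * s)))"
          by (simp only:)
        also have "\<dots> \<le> ennreal (2 * exp (-2 * s)) * emeasure M {\<omega>\<in>space M. Tp \<omega> \<le> s}"
          using em pr by (intro mult_left_mono) auto
        finally show ?thesis .
      next
        case False
        then have ql: "q < 1" "L < s" using q by auto
        have L0: "0 \<le> L" unfolding L_def using ql q by (auto intro!: mult_nonneg_nonneg)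
        have "prob {\<omega>\<in>space M. Y e \<omega> \<le> L} = (1 / q) * (1 - exp (- q * L))"
          using Y_cdf eE L0 unfolding q_def L_def by auto
        also have "exp (- q * L) = 1 - q" unfolding L_def by (rule expLp'[OF q(1) ql(1)])
        finally have p1: "prob {\<omega>\<in>space M. Y e \<omega> \<le> L} = 1" using q by simp
        have "prob {\<omega>\<in>space M. Y e \<omega> \<le> L} \<le> prob {\<omega>\<in>space M. Y e \<omega> \<le> s}"
          by (rule finite_measure_mono) (use ql eE in auto)
        then have "1 \<le> prob {\<omega>\<in>space M. Y e \<omega> \<le> s}" using p1 by simp
        then have "ennreal 1 \<le> emeasure M {\<omega>\<in>space M. Tp \<omega> \<le> s}"
          using em by (meson ennreal_leI order_trans)
        moreover have "ennreal (lbf q s) = ennreal (2 * exp (-2 * s)) * ennreal 1"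
          using False s0 unfolding lbf_def L_def[symmetric] by auto
        ultimately show ?thesis by (metis mult_left_mono zero_le)
      qed
    qed
  qed
  also have "(\<integral>\<^sup>+s. ennreal (lbf q s) \<partial>lborel) = ennreal (g q)" by (rule lbf_int[OF q])
  finally have "ennreal (g q) \<le> ennreal c1" .
  then show ?thesis using c1_nonneg unfolding q_def by (simp add: ennreal_le_iff)
qed

end

theorem lemma2:
  fixes V :: "'v set" and E :: "'v set set"
    and p x :: "'v set \<Rightarrow> real" and t :: "'v \<Rightarrow> nat"
    and M :: "'w measure"
    and Ehat :: "'w \<Rightarrow> 'v set set"
    and Y :: "'v set \<Rightarrow> 'w \<Rightarrow> real"
    and X :: "'v set \<Rightarrow> 'w \<Rightarrow> bool"
    and r :: "'v set \<Rightarrow> nat"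
    and e :: "'v set"
  assumes bip: "bipartite_graph V E"
    and p_range: "\<forall>f\<in>E. 0 < p f \<and> p f \<le> 1"
    and feas: "lp_bip_feasible V E p t x"
    and M: "prob_space M"
    and Ehat_meas: "Ehat \<in> measurable M (count_space UNIV)"
    and Ehat_sub: "\<forall>\<omega>\<in>space M. Ehat \<omega> \<subseteq> E"
    and marg: "\<forall>f\<in>E. measure M {\<omega> \<in> space M. f \<in> Ehat \<omega>} = x f"
    and negcor: "\<forall>v\<in>V. \<forall>S\<subseteq>delta_v E v. \<forall>b::bool.
        measure M {\<omega> \<in> space M. \<forall>f\<in>S. (f \<in> Ehat \<omega>) = b}
          \<le> (\<Prod>f\<in>S. measure M {\<omega> \<in> space M. (f \<in> Ehat \<omega>) = b})"
    and Y_meas: "\<forall>f\<in>E. Y f \<in> borel_measurable M"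
    and Y_range: "\<forall>f\<in>E. AE \<omega> in M. 0 \<le> Y f \<omega> \<and>
        (p f = 1 \<or> Y f \<omega> \<le> (1 / p f) * ln (1 / (1 - p f)))"
    and Y_cdf: "\<forall>f\<in>E. \<forall>y. 0 \<le> y \<and> (p f = 1 \<or> y \<le> (1 / p f) * ln (1 / (1 - p f))) \<longrightarrow>
        measure M {\<omega> \<in> space M. Y f \<omega> \<le> y} = (1 / p f) * (1 - exp (- p f * y))"
    and X_meas: "\<forall>f\<in>E. X f \<in> measurable M (count_space UNIV)"
    and X_prob: "\<forall>f\<in>E. measure M {\<omega> \<in> space M. X f \<omega>} = p f"
    and indep: "prob_space.indep_sets M
        (\<lambda>i. case i of
            SrcE \<Rightarrow> {Ehat -` A \<inter> space M | A. A \<in> sets (count_space UNIV)}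
          | SrcY f \<Rightarrow> {Y f -` A \<inter> space M | A. A \<in> sets borel}
          | SrcX f \<Rightarrow> {X f -` A \<inter> space M | A. A \<in> sets (count_space UNIV)})
        ({SrcE} \<union> SrcY ` E \<union> SrcX ` E)"
    and r_inj: "inj_on r E"
    and eE: "e \<in> E"
  shows "measure M {\<omega> \<in> space M. safe E (Ehat \<omega>) (\<lambda>f. Y f \<omega>) r (\<lambda>f. X f \<omega>) e}
           \<ge> g (p e) * measure M {\<omega> \<in> space M. e \<in> Ehat \<omega>}"
proof -
  interpret L: L2 V E p x t M Ehat Y X r e
    by (rule L2.intro[OF bip p_range feas M Ehat_meas Ehat_sub marg negcor Y_meas Y_range Y_cdf X_meas X_prob indep r_inj eE])
  have "g (p e) * measure M {\<omega> \<in> space M. e \<in> Ehat \<omega>} = g (p e) * x e" using marg eE by simp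
  also have "\<dots> \<le> L.c1 * x e" by (rule mult_right_mono[OF L.c1_bound L.x_nonneg[OF eE]])
  also have "\<dots> \<le> measure M L.Aev" by (rule L.Aev_bound)
  also have "\<dots> \<le> measure M L.Ssafe" by (rule L.finite_measure_mono[OF L.Aev_sub L.Ssafe_event])
  also have "L.Ssafe = {\<omega> \<in> space M. safe E (Ehat \<omega>) (\<lambda>f. Y f \<omega>) r (\<lambda>f. X f \<omega>) e}"
    by (simp add: L.Ssafe_def)
  finally show ?thesis .
qed

end
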